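(* Let $\mathbb{S}^2=\{\boldsymbol{x}\in\mathbb{R}^3:\boldsymbol{x}^\top\boldsymbol{x}=1\}$ and let $\{b_n:n\in\mathbb{N}_0\}$ be a sequence of nonnegative functions $b_n:\mathbb{S}^2\to[0,\infty)$ such that $\sum_{n=0}^\infty b_n(\boldsymbol{x})<\infty$ for every $\boldsymbol{x}\in\mathbb{S}^2$. Define $$C(\boldsymbol{x}_1,\boldsymbol{x}_2)=\sum_{n=0}^\infty \{b_n(\boldsymbol{x}_1)b_n(\boldsymbol{x}_2)\}^{1/2}P_n(\boldsymbol{x}_1^\top\boldsymbol{x}_2),\qquad \boldsymbol{x}_1,\boldsymbol{x}_2\in\mathbb{S}^2.$$ Then $C$ is semi positive definite: for every $k\in\mathbb{N}$, all $\boldsymbol{x}_1,\dots,\boldsymbol{x}_k\in\mathbb{S}^2$ and all $a_1,\dots,a_k\in\mathbb{R}$, $$\sum_{i=1}^k\sum_{j=1}^k a_ia_jC(\boldsymbol{x}_i,\boldsymbol{x}_j)\ge 0.$$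
   Context: $P_n$ denotes the Legendre polynomial of degree $n$ (normalized so that $P_n(1)=1$). *)

theory Defs
  imports "HOL-Analysis.Analysis"
begin

text \<open>Legendre polynomials via Bonnet's recurrence, normalized so that P_n(1) = 1:
  P_0 = 1, P_1 = t, (n+2) P_(n+2) = (2n+3) t P_(n+1) - (n+1) P_n.\<close>
fun legendreP :: "nat \<Rightarrow> real \<Rightarrow> real" where
  "legendreP 0 t = 1"
| "legendreP (Suc 0) t = t"
| "legendreP (Suc (Suc n)) t =
     ((2 * real n + 3) * t * legendreP (Suc n) t - (real n + 1) * legendreP n t) / (real n + 2)"

definition sphere2 :: "(real^3) set" where
  "sphere2 = {x. x \<bullet> x = 1}"

definition covC :: "(nat \<Rightarrow> real^3 \<Rightarrow> real) \<Rightarrow> real^3 \<Rightarrow> real^3 \<Rightarrow> real" where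
  "covC b x1 x2 = (\<Sum>n. sqrt (b n x1 * b n x2) * legendreP n (x1 \<bullet> x2))"

end

theory Submission
  imports Defs "HOL-Computational_Algebra.Polynomial"
begin


lemma const_poly_pow: "[:v:]^m = [:v^m:]"
  by (induction m) (auto simp: one_pCons mult.commute)

lemma monom_times_const: "monom a n * [:b:] = monom (a*b) n"
  by (simp add: mult.commute smult_monom)

lemma lin_power_expand:
  fixes u v :: "'a::comm_ring_1"
  shows "[:v,u:]^N = (\<Sum>k\<le>N. monom (of_nat (N choose k) * u^k * v^(N-k)) k)"
proof -
  have "[:v,u:] = monom u 1 + [:v:]" by (simp add: monom_altdef)
  hence "[:v,u:]^N = (\<Sum>k\<le>N. of_nat (N choose k) * monom u 1 ^ k * [:v:]^(N-k))"
    by (simp add: binomial_ring atLeast0AtMost)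
  also have "\<dots> = (\<Sum>k\<le>N. monom (of_nat (N choose k) * u^k * v^(N-k)) k)"
    by (intro sum.cong refl) (simp add: monom_power const_poly_pow monom_times_const of_nat_poly smult_monom mult_ac)
  finally show ?thesis .
qed

lemma coeff_lin_power:
  fixes u v :: "'a::comm_ring_1"
  shows "coeff ([:v,u:]^N) j = of_nat (N choose j) * u^j * v^(N-j)"
  by (cases "j \<le> N") (simp_all add: lin_power_expand coeff_sum coeff_monom binomial_eq_0)

definition FP :: "nat \<Rightarrow> complex poly \<Rightarrow> complex poly \<Rightarrow> complex" where
  "FP N p r = (\<Sum>j\<le>N. of_nat (fact j * fact (N-j)) * coeff p j * coeff r j)"

definition hev :: "nat \<Rightarrow> complex poly \<Rightarrow> complex \<Rightarrow> complex \<Rightarrow> complex" where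
  "hev N p u v = (\<Sum>j\<le>N. coeff p j * u^j * v^(N-j))"

lemma FP_repro: "FP N p ([:v,u:]^N) = fact N * hev N p u v"
  unfolding FP_def hev_def sum_distrib_left
proof (intro sum.cong refl)
  fix j assume "j \<in> {..N}"
  hence j: "j \<le> N" by simp
  have F: "of_nat (fact j * fact (N-j)) * of_nat (N choose j) = (fact N :: complex)"
    using binomial_fact_lemma[OF j] by (metis of_nat_fact of_nat_mult)
  have "of_nat (fact j * fact (N - j)) * coeff p j * coeff ([:v, u:] ^ N) j =
        (of_nat (fact j * fact (N-j)) * of_nat (N choose j)) * (coeff p j * u ^ j * v ^ (N - j))"
    unfolding coeff_lin_power by (simp only: mult_ac)
  thus "of_nat (fact j * fact (N - j)) * coeff p j * coeff ([:v, u:] ^ N) j =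
        fact N * (coeff p j * u ^ j * v ^ (N - j))" by (simp only: F)
qed

lemma FP_add: "FP N p (r1 + r2) = FP N p r1 + FP N p r2"
  by (simp add: FP_def algebra_simps sum.distrib)

lemma FP_smult: "FP N p (smult c r) = c * FP N p r"
  by (simp add: FP_def sum_distrib_left mult_ac)

lemma FP_zero: "FP N p 0 = 0"
  by (simp add: FP_def)

lemma FP_sum: "FP N p (sum f A) = (\<Sum>a\<in>A. FP N p (f a))"
  by (induction A rule: infinite_finite_induct) (simp_all add: FP_zero FP_add)

lemma hev_poly:
  assumes "degree p \<le> N" "v \<noteq> 0"
  shows "hev N p u v = v^N * poly p (u/v)"
proof -
  have P: "poly p (u/v) = (\<Sum>i\<le>N. coeff p i * (u/v)^i)"
    unfolding poly_altdef
    by (rule sum.mono_neutral_left) (use assms in \<open>auto simp: coeff_eq_0\<close>)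
  have T: "v^N * (coeff p i * (u/v)^i) = coeff p i * u^i * v^(N-i)" if "i \<le> N" for i
  proof -
    have "v^N = v^i * v^(N-i)" using that by (simp flip: power_add)
    thus ?thesis using assms(2) by (simp add: power_divide field_simps)
  qed
  show ?thesis unfolding hev_def P sum_distrib_left by (rule sum.cong) (auto simp: T)
qed

lemma hev_zero: "hev N p u 0 = coeff p N * u^N"
proof -
  have "hev N p u 0 = (\<Sum>j\<le>N. if j = N then coeff p N * u^N else 0)"
    unfolding hev_def by (intro sum.cong refl) auto
  thus ?thesis by simp
qed

lemma coeff_mult_top:
  assumes "degree p \<le> N" "degree q \<le> M"
  shows "coeff (p*q) (N+M) = coeff p N * coeff q M"
proof (cases "degree p = N \<and> degree q = M")
  case True thus ?thesis using coeff_mult_degree_sum[of p q] by simp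
next
  case False
  hence "coeff p N = 0 \<or> coeff q M = 0" using assms by (auto simp: coeff_eq_0)
  moreover have "degree (p*q) < N + M" using False assms degree_mult_le[of p q] by linarith
  hence "coeff (p*q) (N+M) = 0" by (rule coeff_eq_0)
  ultimately show ?thesis by auto
qed

lemma hev_mult:
  assumes "degree p \<le> N" "degree q \<le> M"
  shows "hev (N+M) (p*q) u v = hev N p u v * hev M q u v"
proof (cases "v = 0")
  case True
  have "hev (N+M) (p*q) u v = coeff (p*q) (N+M) * u^(N+M)" using True by (simp add: hev_zero)
  also have "\<dots> = (coeff p N * u^N) * (coeff q M * u^M)" by (simp add: coeff_mult_top[OF assms] power_add)
  finally show ?thesis using True by (simp add: hev_zero)
next
  case False
  have d: "degree (p*q) \<le> N + M" using assms degree_mult_le[of p q] by linarith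
  have "hev (N+M) (p*q) u v = v^(N+M) * poly (p*q) (u/v)" by (rule hev_poly[OF d False])
  also have "\<dots> = (v^N * poly p (u/v)) * (v^M * poly q (u/v))" by (simp add: power_add)
  finally show ?thesis using hev_poly[OF assms(1) False] hev_poly[OF assms(2) False] by simp
qed

lemma hev_lin: "hev 1 [:b,a:] u v = a * u + b * v"
  by (simp add: hev_def)

lemma hev_pow:
  assumes "degree L \<le> 1"
  shows "hev n (L^n) u v = (hev 1 L u v)^n"
proof (induction n)
  case 0 thus ?case by (simp add: hev_def)
next
  case (Suc n)
  have "degree (L^n) \<le> degree L * n" by (rule degree_power_le)
  also have "\<dots> \<le> 1 * n" using assms by (intro mult_right_mono) auto
  finally have d: "degree (L^n) \<le> n" by simp
  have "hev (1+n) (L * L^n) u v = hev 1 L u v * hev n (L^n) u v"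
    by (rule hev_mult[OF assms d])
  thus ?case using Suc by simp
qed

lemma binom_poly_expand:
  fixes s :: complex
  shows "(M1 + smult s M2)^N = (\<Sum>m\<le>N. smult (of_nat (N choose m) * s^m) (M2^m * M1^(N-m)))"
proof -
  have "(M1 + smult s M2)^N = (smult s M2 + M1)^N" by (simp add: add.commute)
  also have "\<dots> = (\<Sum>m\<le>N. of_nat (N choose m) * (smult s M2)^m * M1^(N-m))"
    by (rule binomial_ring)
  also have "\<dots> = (\<Sum>m\<le>N. smult (of_nat (N choose m) * s^m) (M2^m * M1^(N-m)))"
    by (intro sum.cong refl) (simp add: smult_power of_nat_poly mult_ac)
  finally show ?thesis .
qed

lemma coeff_mult_lin_pows:
  fixes a b c d :: complex
  shows "coeff ([:a,b:]^n * [:c,d:]^n) n =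
    (\<Sum>k\<le>n. of_nat (n choose k)^2 * a^(n-k) * b^k * c^k * d^(n-k))"
  unfolding coeff_mult
proof (intro sum.cong refl)
  fix k assume "k \<in> {..n}"
  hence k: "k \<le> n" by simp
  show "coeff ([:a, b:] ^ n) k * coeff ([:c, d:] ^ n) (n - k) =
        of_nat (n choose k)^2 * a^(n-k) * b^k * c^k * d^(n-k)"
    using k by (simp add: coeff_lin_power binomial_symmetric[OF k, symmetric] power2_eq_square mult_ac)
qed

lemma degree_lin_le: "degree [:b,a:] \<le> 1"
  by (simp add: degree_pCons_le)

lemma degree_pow_lin: "degree ([:b,a:]^n) \<le> n"
proof -
  have "degree ([:b,a:]^n) \<le> degree [:b,a:] * n" by (rule degree_power_le)
  also have "\<dots> \<le> 1 * n" using degree_lin_le by (intro mult_right_mono) auto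
  finally show ?thesis by simp
qed

lemma FP_main:
  fixes a1 b1 a2 b2 c1 d1 c2 d2 :: complex
  defines "P11 \<equiv> a1*c1 + b1*d1" and "P12 \<equiv> a1*c2 + b1*d2"
    and "P21 \<equiv> a2*c1 + b2*d1" and "P22 \<equiv> a2*c2 + b2*d2"
  shows "FP (2*n) ([:b1,a1:]^n * [:b2,a2:]^n) ([:d2,c2:]^n * [:d1,c1:]^n) =
    fact n * fact n * (\<Sum>k\<le>n. of_nat (n choose k)^2 * P11^(n-k) * P12^k * P21^k * P22^(n-k))"
proof -
  let ?p = "[:b1,a1:]^n * [:b2,a2:]^n"
  let ?M1 = "[:d1,c1:]" and ?M2 = "[:d2,c2:]"
  define LP where "LP = (\<Sum>m\<le>2*n. monom (of_nat ((2*n) choose m) * FP (2*n) ?p (?M2^m * ?M1^(2*n-m))) m)"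
  define RP where "RP = smult (fact (2*n)) ([:P11,P12:]^n * [:P21,P22:]^n)"
  have "poly LP s = poly RP s" for s
  proof -
    have lin: "?M1 + smult s ?M2 = [:d1 + s*d2, c1 + s*c2:]" by simp
    have "poly LP s = FP (2*n) ?p ((?M1 + smult s ?M2)^(2*n))"
      unfolding LP_def binom_poly_expand FP_sum FP_smult
      by (simp add: poly_sum poly_monom mult_ac)
    also have "\<dots> = fact (2*n) * hev (n+n) ?p (c1 + s*c2) (d1 + s*d2)"
      unfolding lin FP_repro by (simp add: mult_2)
    also have "hev (n+n) ?p (c1 + s*c2) (d1 + s*d2) =
       hev n ([:b1,a1:]^n) (c1 + s*c2) (d1 + s*d2) * hev n ([:b2,a2:]^n) (c1 + s*c2) (d1 + s*d2)"
      by (rule hev_mult[OF degree_pow_lin degree_pow_lin])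
    also have "\<dots> = (P11 + s*P12)^n * (P21 + s*P22)^n"
      unfolding hev_pow[OF degree_lin_le] hev_lin by (simp add: P11_def P12_def P21_def P22_def algebra_simps)
    finally show ?thesis by (simp add: RP_def)
  qed
  hence "LP = RP" using poly_eq_poly_eq_iff by blast
  hence "coeff LP n = coeff RP n" by simp
  moreover have "coeff LP n = of_nat ((2*n) choose n) * FP (2*n) ?p (?M2^n * ?M1^n)"
  proof -
    have "coeff LP n = (\<Sum>m\<le>2*n. if m = n then of_nat ((2*n) choose m) * FP (2*n) ?p (?M2^m * ?M1^(2*n-m)) else 0)"
      unfolding LP_def coeff_sum by (intro sum.cong refl) (auto simp: coeff_monom)
    also have "\<dots> = of_nat ((2*n) choose n) * FP (2*n) ?p (?M2^n * ?M1^(2*n-n))"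
      by (subst sum.delta) auto
    finally show ?thesis by (simp add: mult_2)
  qed
  moreover have "coeff RP n = fact (2*n) * (\<Sum>k\<le>n. of_nat (n choose k)^2 * P11^(n-k) * P12^k * P21^k * P22^(n-k))"
    unfolding RP_def coeff_smult coeff_mult_lin_pows by simp
  moreover have "(fact (2*n) :: complex) = of_nat ((2*n) choose n) * (fact n * fact n)"
  proof -
    have "fact n * fact (2*n - n) * ((2*n) choose n) = fact (2*n)" by (rule binomial_fact_lemma) simp
    hence "(fact (2*n) :: complex) = of_nat (fact n * fact n * ((2*n) choose n))" by (simp add: mult_2)
    thus ?thesis by (simp add: of_nat_mult mult_ac)
  qed
  moreover have "of_nat ((2*n) choose n) \<noteq> (0::complex)" by simp
  ultimately show ?thesis by (simp add: mult.commute[of "?M2^n"])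
qed



definition hp :: "nat \<Rightarrow> real poly" where
  "hp n = (\<Sum>k\<le>n. monom (of_nat (n choose k)^2) k)"

lemma coeff_hp: "coeff (hp n) k = of_nat (n choose k)^2"
  by (cases "k \<le> n") (auto simp: hp_def coeff_sum coeff_monom binomial_eq_0)

lemma binom_rel: "real (Suc j) * real (n choose Suc j) = (real n - real j) * real (n choose j)"
proof (cases "j \<le> n")
  case True
  have "Suc j * (n choose Suc j) = (n - j) * (n choose j)"
    using binomial_absorption binomial_absorb_comp by metis
  hence "real (Suc j * (n choose Suc j)) = real ((n - j) * (n choose j))" by simp
  thus ?thesis using True by (simp only: of_nat_mult of_nat_diff)
next
  case False thus ?thesis by (simp add: binomial_eq_0)
qed

lemma key_identity:
  fixes X Y Z n j :: real
  assumes h1: "(j+1)*Y = (n-j)*X" and h2: "(j+2)*Z = (n-j-1)*Y" and j: "j \<ge> 0"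
  shows "(n+2)*(X+2*Y+Z)^2 = (2*n+3)*((Y+Z)^2 + (X+Y)^2) - (n+1)*(Z^2 - 2*Y^2 + X^2)"
proof -
  define A where "A = (j+1)*Y"
  define B where "B = (j+1)*(j+2)*Z"
  have B2: "B = (n-j-1)*(n-j)*X"
  proof -
    have "B = (j+1)*((j+2)*Z)" by (simp add: B_def mult.assoc)
    also have "\<dots> = (n-j-1)*((j+1)*Y)" by (simp add: h2)
    finally show ?thesis by (simp add: h1)
  qed
  have A2: "A = (n-j)*X" by (simp add: A_def h1)
  have "(j+1)*(j+1)*(j+2)*(-n*Y^2 + X*Y + Y*Z + (n+2)*X*Z)
      = -n*(j+2)*A^2 + (j+1)*(j+2)*X*A + A*B + (j+1)*(n+2)*X*B"
    unfolding A_def B_def by algebra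
  also have "\<dots> = 0" unfolding A2 B2 by algebra
  finally have "(j+1)*(j+1)*(j+2)*(-n*Y^2 + X*Y + Y*Z + (n+2)*X*Z) = 0" .
  moreover have "(j+1)*(j+1)*(j+2) \<noteq> 0" using j by (simp add: add_nonneg_eq_0_iff)
  ultimately have "-n*Y^2 + X*Y + Y*Z + (n+2)*X*Z = 0" by simp
  thus ?thesis by algebra
qed

lemma hp_rec:
  "smult (real n + 2) (hp (Suc (Suc n))) =
   smult (2*real n + 3) ([:1,1:] * hp (Suc n)) - smult (real n + 1) ([:1,-2,1:] * hp n)"
proof (rule poly_eqI)
  fix k
  show "coeff (smult (real n + 2) (hp (Suc (Suc n)))) k =
        coeff (smult (2*real n + 3) ([:1,1:] * hp (Suc n)) - smult (real n + 1) ([:1,-2,1:] * hp n)) k"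
  proof (cases k)
    case 0 thus ?thesis by (simp add: coeff_hp mult_pCons_left)
  next
    case (Suc k')
    show ?thesis
    proof (cases k')
      case 0 thus ?thesis using Suc by (simp add: coeff_hp mult_pCons_left power2_eq_square algebra_simps)
    next
      case (Suc j)
      have r1: "(real j+1) * real (n choose Suc j) = (real n - real j) * real (n choose j)"
        using binom_rel[of j n] by (simp add: add.commute)
      have r2: "(real j+2) * real (n choose Suc (Suc j)) = (real n - real j - 1) * real (n choose Suc j)"
        using binom_rel[of "Suc j" n] by (simp add: algebra_simps)
      have K: "(real n+2)*(real (n choose j)+2*real (n choose Suc j)+real (n choose Suc (Suc j)))^2 =
        (2*real n+3)*((real (n choose Suc j)+real (n choose Suc (Suc j)))^2 + (real (n choose j)+real (n choose Suc j))^2)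
        - (real n+1)*(real (n choose Suc (Suc j))^2 - 2*real (n choose Suc j)^2 + real (n choose j)^2)"
        by (rule key_identity[OF r1 r2]) simp
      show ?thesis using \<open>k = Suc k'\<close> Suc K
        by (simp add: coeff_hp mult_pCons_left algebra_simps)
    qed
  qed
qed

definition Qf :: "nat \<Rightarrow> real \<Rightarrow> real" where
  "Qf n t = (\<Sum>k\<le>n. real (n choose k)^2 * ((1+t)/2)^(n-k) * ((t-1)/2)^k)"

lemma pow_div_aux:
  fixes u v :: real
  assumes "u \<noteq> 0" "k \<le> n"
  shows "u^n * (v/u)^k = u^(n-k) * v^k"
proof -
  have "u^n = u^(n-k) * u^k" using assms(2) by (simp flip: power_add)
  hence "u^n * (v/u)^k = u^(n-k) * v^k * (u^k / u^k)" by (simp add: power_divide)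
  thus ?thesis using assms(1) by simp
qed

lemma Qf_hp:
  assumes "t \<noteq> -1"
  shows "Qf n t = ((1+t)/2)^n * poly (hp n) (((t-1)/2) / ((1+t)/2))"
proof -
  let ?u = "(1+t)/2" and ?v = "(t-1)/2"
  have u: "?u \<noteq> 0" using assms by simp
  have "?u^n * poly (hp n) (?v/?u) = (\<Sum>k\<le>n. real (n choose k)^2 * (?u^n * (?v/?u)^k))"
    by (simp add: hp_def poly_sum poly_monom sum_distrib_left mult_ac)
  also have "\<dots> = Qf n t" unfolding Qf_def
  proof (intro sum.cong refl)
    fix k assume "k \<in> {..n}"
    hence "k \<le> n" by simp
    thus "real (n choose k)^2 * (?u^n * (?v/?u)^k) = real (n choose k)^2 * ?u^(n-k) * ?v^k"
      by (simp only: pow_div_aux[OF u \<open>k \<le> n\<close>] mult.assoc)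
  qed
  finally show ?thesis by simp
qed

lemma legendre_m1: "legendreP n (-1) = (-1)^n \<and> legendreP (Suc n) (-1) = (-1)^(Suc n)"
  by (induction n) (auto simp: field_simps)

lemma Qf_m1: "Qf n (-1) = (-1)^n"
proof -
  have "Qf n (-1) = (\<Sum>k\<le>n. if k = n then (-1)^n else 0)"
    unfolding Qf_def by (intro sum.cong refl) auto
  thus ?thesis by simp
qed

lemma legendre_Qf: "legendreP n t = Qf n t"
proof (cases "t = -1")
  case True thus ?thesis by (simp add: legendre_m1[THEN conjunct1] Qf_m1)
next
  case False
  define u where "u = (1+t)/2"
  define r where "r = ((t-1)/2) / u"
  have u: "u \<noteq> 0" using False by (simp add: u_def)
  have ur1: "u * (1 + r) = t" using u by (simp add: r_def u_def field_simps)
  have ur2: "u * (1 - r) = 1" using u by (simp add: r_def u_def field_simps)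
  have Q: "Qf n t = u^n * poly (hp n) r" for n using Qf_hp[OF False] by (simp add: u_def r_def)
  have "legendreP n t = Qf n t \<and> legendreP (Suc n) t = Qf (Suc n) t"
  proof (induction n)
    case 0 thus ?case using ur1 by (simp add: Q hp_def poly_monom algebra_simps)
  next
    case (Suc n)
    have R: "(real n + 2) * poly (hp (Suc (Suc n))) r =
      (2*real n + 3) * ((1 + r) * poly (hp (Suc n)) r) - (real n + 1) * ((1 - r)^2 * poly (hp n) r)"
    proof -
      have "poly (smult (real n + 2) (hp (Suc (Suc n)))) r =
         poly (smult (2*real n + 3) ([:1,1:] * hp (Suc n)) - smult (real n + 1) ([:1,-2,1:] * hp n)) r"
        by (simp only: hp_rec)
      thus ?thesis by (simp add: power2_eq_square algebra_simps)
    qed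
    have R': "poly (hp (Suc (Suc n))) r = ((2*real n + 3) * ((1 + r) * poly (hp (Suc n)) r) - (real n + 1) * ((1 - r)^2 * poly (hp n) r)) / (real n + 2)"
    proof -
      have "real n + 2 \<noteq> 0" by simp
      thus ?thesis using R by (simp add: eq_divide_eq mult.commute)
    qed
    have "Qf (Suc (Suc n)) t = u^n * (u*u) * poly (hp (Suc (Suc n))) r" by (simp add: Q)
    also have "\<dots> = u^n * (u*u) * (((2*real n + 3) * ((1 + r) * poly (hp (Suc n)) r) - (real n + 1) * ((1 - r)^2 * poly (hp n) r)) / (real n + 2))"
      by (simp only: R')
    also have "\<dots> = ((2*real n + 3) * (u*(1+r)) * (u^(Suc n) * poly (hp (Suc n)) r) - (real n + 1) * (u*(1-r))^2 * (u^n * poly (hp n) r)) / (real n + 2)"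
      by (simp add: power2_eq_square algebra_simps)
    also have "\<dots> = ((2*real n + 3) * t * Qf (Suc n) t - (real n + 1) * Qf n t) / (real n + 2)"
      by (simp only: ur1 ur2 Q) simp
    finally show ?case using Suc by simp
  qed
  thus ?thesis by simp
qed



definition spin :: "real^3 \<Rightarrow> complex \<Rightarrow> complex \<Rightarrow> bool" where
  "spin x a b \<longleftrightarrow> a * cnj a + b * cnj b = 1 \<and> complex_of_real (x$3) = a * cnj a - b * cnj b
     \<and> complex_of_real (x$1) + \<i> * complex_of_real (x$2) = 2 * cnj a * b"

lemma inner3: "(x::real^3) \<bullet> y = x$1 * y$1 + x$2 * y$2 + x$3 * y$3"
  by (simp add: inner_vec_def sum_3)

lemma spin_exists:
  assumes "x \<in> sphere2"
  shows "\<exists>a b. spin x a b"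
proof -
  have n: "(x$1)^2 + (x$2)^2 + (x$3)^2 = 1" using assms
    by (simp add: sphere2_def inner3 power2_eq_square)
  show ?thesis
  proof (cases "x$3 = -1")
    case True
    hence "(x$1)^2 + (x$2)^2 = 0" using n by simp
    hence "x$1 = 0" "x$2 = 0" by (simp_all add: sum_power2_eq_zero_iff)
    hence "spin x 0 1" using True by (simp add: spin_def)
    thus ?thesis by blast
  next
    case False
    have "(x$3)^2 \<le> 1" using n by (smt (verit) zero_le_power2)
    hence "\<bar>x$3\<bar> \<le> 1" using abs_le_square_iff[of "x$3" 1] by simp
    hence "x$3 \<ge> -1" by simp
    hence pos: "1 + x$3 > 0" using False by simp
    define s where "s = sqrt ((1 + x$3)/2)"
    have s: "s > 0" "s^2 = (1 + x$3)/2" using pos by (simp_all add: s_def)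
    define a where "a = Complex s 0"
    define b where "b = Complex ((x$1)/(2 * s)) ((x$2)/(2 * s))"
    have bb: "(x$1/(2 * s))^2 + (x$2/(2 * s))^2 = (1 - x$3)/2"
    proof -
      have "(x$1/(2 * s))^2 + (x$2/(2 * s))^2 = ((x$1)^2 + (x$2)^2) / (4 * s^2)"
        by (simp add: power_divide power_mult_distrib add_divide_distrib)
      also have "\<dots> = (1 - (x$3)^2) / (2*(1 + x$3))"
      proof -
        have "(x$1)^2 + (x$2)^2 = 1 - (x$3)^2" using n by simp
        moreover have "4 * s^2 = 2*(1 + x$3)" using s(2) by simp
        ultimately show ?thesis by simp
      qed
      also have "\<dots> = (1 - x$3)/2" using pos by (simp add: field_simps power2_eq_square)
      finally show ?thesis .
    qed
    have "(Re a)^2 + (Im a)^2 = (1 + x$3)/2" using s(2) by (simp add: a_def)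
    hence aa: "a * cnj a = complex_of_real ((1 + x$3)/2)"
      by (simp only: complex_mult_cnj)
    have "(Re b)^2 + (Im b)^2 = (1 - x$3)/2" using bb by (simp add: b_def)
    hence bb2: "b * cnj b = complex_of_real ((1 - x$3)/2)"
      by (simp only: complex_mult_cnj)
    have ab: "2 * cnj a * b = complex_of_real (x$1) + \<i> * complex_of_real (x$2)"
      unfolding a_def b_def using s(1) by (simp add: complex_eq_iff)
    have "spin x a b"
      unfolding spin_def aa bb2 ab
      by (simp flip: of_real_add of_real_diff add: field_simps)
    thus ?thesis by blast
  qed
qed

lemma ring_id1:
  fixes a a' b b' c c' d d' :: complex
  shows "2*((a*c' + b*d')*(a'*c + b'*d)) = (a*a'+b*b')*(c*c'+d*d') + ((a'*b+a*b')*(c'*d+c*d') - (a'*b-a*b')*(c'*d-c*d') + (a*a'-b*b')*(c*c'-d*d'))"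
  by algebra

lemma ring_id2:
  fixes a a' b b' c c' d d' :: complex
  shows "2*(-((b*c - a*d)*(b'*c' - a'*d'))) = ((a'*b+a*b')*(c'*d+c*d') - (a'*b-a*b')*(c'*d-c*d') + (a*a'-b*b')*(c*c'-d*d')) - (a*a'+b*b')*(c*c'+d*d')"
  by algebra

lemma two_cancel:
  fixes u w :: complex
  assumes "2*u = 2*w" shows "u = w" using assms by simp

lemma spin_parts:
  assumes "spin x a b"
  shows "complex_of_real (x$1) = cnj a * b + a * cnj b"
    and "\<i> * complex_of_real (x$2) = cnj a * b - a * cnj b"
    and "complex_of_real (x$3) = a * cnj a - b * cnj b"
    and "a * cnj a + b * cnj b = 1"
proof -
  have H: "complex_of_real (x$1) + \<i> * complex_of_real (x$2) = 2 * cnj a * b"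
    using assms unfolding spin_def by simp
  have "cnj (complex_of_real (x$1) + \<i> * complex_of_real (x$2)) = cnj (2 * cnj a * b)"
    using H by simp
  hence H': "complex_of_real (x$1) - \<i> * complex_of_real (x$2) = 2 * a * cnj b" by simp
  have "2 * complex_of_real (x$1) = (complex_of_real (x$1) + \<i> * complex_of_real (x$2)) + (complex_of_real (x$1) - \<i> * complex_of_real (x$2))"
    by simp
  also have "\<dots> = 2 * (cnj a * b + a * cnj b)" unfolding H H' by simp
  finally show "complex_of_real (x$1) = cnj a * b + a * cnj b" by (rule two_cancel)
  have "2 * (\<i> * complex_of_real (x$2)) = (complex_of_real (x$1) + \<i> * complex_of_real (x$2)) - (complex_of_real (x$1) - \<i> * complex_of_real (x$2))"
    by simp
  also have "\<dots> = 2 * (cnj a * b - a * cnj b)" unfolding H H' by simp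
  finally show "\<i> * complex_of_real (x$2) = cnj a * b - a * cnj b" by (rule two_cancel)
  show "complex_of_real (x$3) = a * cnj a - b * cnj b" "a * cnj a + b * cnj b = 1"
    using assms unfolding spin_def by simp_all
qed

lemma inner_complex:
  "complex_of_real ((x::real^3) \<bullet> y) = complex_of_real (x$1) * complex_of_real (y$1)
     - (\<i> * complex_of_real (x$2)) * (\<i> * complex_of_real (y$2)) + complex_of_real (x$3) * complex_of_real (y$3)"
  by (simp add: inner3 algebra_simps)

lemma spin_inner:
  assumes "spin x a b" "spin y c d"
  shows "(a * cnj c + b * cnj d) * (cnj a * c + cnj b * d) = complex_of_real ((1 + x \<bullet> y)/2)"
    and "- ((b * c - a * d) * (cnj b * cnj c - cnj a * cnj d)) = complex_of_real ((x \<bullet> y - 1)/2)"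
proof -
  note X = spin_parts[OF assms(1)] and Y = spin_parts[OF assms(2)]
  have e: "complex_of_real (x \<bullet> y) = ((cnj a*b+a*cnj b)*(cnj c*d+c*cnj d) - (cnj a*b-a*cnj b)*(cnj c*d-c*cnj d) + (a*cnj a-b*cnj b)*(c*cnj c-d*cnj d))"
    unfolding inner_complex X(1,2,3) Y(1,2,3) by (rule refl)
  have "2 * ((a * cnj c + b * cnj d) * (cnj a * c + cnj b * d)) = 1 + complex_of_real (x \<bullet> y)"
    unfolding ring_id1 X(4) Y(4) e by simp
  thus "(a * cnj c + b * cnj d) * (cnj a * c + cnj b * d) = complex_of_real ((1 + x \<bullet> y)/2)"
    by (simp add: field_simps)
  have "2 * (- ((b * c - a * d) * (cnj b * cnj c - cnj a * cnj d))) = complex_of_real (x \<bullet> y) - 1"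
    unfolding ring_id2 X(4) Y(4) e by simp
  thus "- ((b * c - a * d) * (cnj b * cnj c - cnj a * cnj d)) = complex_of_real ((x \<bullet> y - 1)/2)"
    by (simp add: field_simps)
qed



definition qp :: "nat \<Rightarrow> complex \<Rightarrow> complex \<Rightarrow> complex poly" where
  "qp n a b = [:b, a:]^n * [:cnj a, - cnj b:]^n"

lemma map_cnj_mult: "map_poly cnj (p * q) = map_poly cnj p * map_poly cnj q"
  by (rule poly_eqI) (simp add: coeff_map_poly coeff_mult cnj_sum)

lemma map_cnj_pow: "map_poly cnj (p ^ n) = (map_poly cnj p) ^ n"
  by (induction n) (simp_all add: map_cnj_mult)

lemma map_cnj_lin: "map_poly cnj [:u, w:] = [:cnj u, cnj w:]"
  by (simp add: map_poly_pCons)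

lemma map_cnj_qp: "map_poly cnj (qp n c d) = [:c, -d:]^n * [:cnj d, cnj c:]^n"
  by (simp add: qp_def map_cnj_mult map_cnj_pow map_cnj_lin mult.commute)

lemma gram:
  assumes "spin x a b" "spin y c d"
  shows "FP (2*n) (qp n a b) (map_poly cnj (qp n c d)) = complex_of_real (fact n * fact n * legendreP n (x \<bullet> y))"
proof -
  have "FP (2*n) (qp n a b) (map_poly cnj (qp n c d)) =
    FP (2*n) ([:b,a:]^n * [:cnj a, - cnj b:]^n) ([:c, -d:]^n * [:cnj d, cnj c:]^n)"
    by (simp only: map_cnj_qp) (simp add: qp_def)
  also have "\<dots> = fact n * fact n * (\<Sum>k\<le>n. of_nat (n choose k)^2 *
      (a * cnj c + b * cnj d)^(n-k) * (a * (-d) + b * c)^k * ((- cnj b) * cnj c + cnj a * cnj d)^k *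
      ((- cnj b) * (-d) + cnj a * c)^(n-k))"
    by (rule FP_main)
  also have "\<dots> = fact n * fact n * (\<Sum>k\<le>n. of_nat (n choose k)^2 *
      ((a * cnj c + b * cnj d) * (cnj a * c + cnj b * d))^(n-k) *
      (- ((b * c - a * d) * (cnj b * cnj c - cnj a * cnj d)))^k)"
  proof -
    have eq: "- ((b * c - a * d) * (cnj b * cnj c - cnj a * cnj d)) = (a * (-d) + b * c) * ((- cnj b) * cnj c + cnj a * cnj d)"
      by algebra
    have eq2: "cnj a * c + cnj b * d = (- cnj b) * (-d) + cnj a * c" by simp
    show ?thesis unfolding eq eq2 power_mult_distrib by (simp add: mult_ac)
  qed
  also have "\<dots> = fact n * fact n * (\<Sum>k\<le>n. of_nat (n choose k)^2 *
      complex_of_real ((1 + x \<bullet> y)/2)^(n-k) * complex_of_real ((x \<bullet> y - 1)/2)^k)"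
    unfolding spin_inner[OF assms] ..
  also have "\<dots> = complex_of_real (fact n * fact n * Qf n (x \<bullet> y))"
    by (simp add: Qf_def add.commute)
  finally show ?thesis by (simp add: legendre_Qf)
qed



lemma legendre_pd:
  fixes c :: "'i \<Rightarrow> real" and x :: "'i \<Rightarrow> real^3"
  assumes I: "finite I" and S: "\<And>i. i \<in> I \<Longrightarrow> x i \<in> sphere2"
  shows "0 \<le> (\<Sum>i\<in>I. \<Sum>j\<in>I. c i * c j * legendreP n (x i \<bullet> x j))"
proof -
  have "\<forall>i\<in>I. \<exists>p. spin (x i) (fst p) (snd p)" using spin_exists[OF S] by auto
  then obtain g where g: "\<And>i. i \<in> I \<Longrightarrow> spin (x i) (fst (g i)) (snd (g i))"
    using bchoice by metis
  define q where "q i = qp n (fst (g i)) (snd (g i))" for i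
  define W where "W l = real (fact l * fact (2*n - l))" for l
  define Sl where "Sl l = (\<Sum>i\<in>I. complex_of_real (c i) * coeff (q i) l)" for l
  have E1: "FP (2*n) (q i) (map_poly cnj (q j)) = complex_of_real (fact n * fact n * legendreP n (x i \<bullet> x j))"
    if "i \<in> I" "j \<in> I" for i j
    unfolding q_def by (rule gram[OF g[OF that(1)] g[OF that(2)]])
  have "complex_of_real (fact n * fact n * (\<Sum>i\<in>I. \<Sum>j\<in>I. c i * c j * legendreP n (x i \<bullet> x j)))
      = (\<Sum>i\<in>I. \<Sum>j\<in>I. complex_of_real (c i * c j) * FP (2*n) (q i) (map_poly cnj (q j)))"
    unfolding of_real_mult of_real_sum sum_distrib_left
    by (intro sum.cong refl) (simp only: E1 of_real_mult, simp add: mult_ac)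
  also have "\<dots> = (\<Sum>i\<in>I. \<Sum>j\<in>I. \<Sum>l\<le>2*n. complex_of_real (W l) * ((complex_of_real (c i) * coeff (q i) l) * cnj (complex_of_real (c j) * coeff (q j) l)))"
    unfolding FP_def W_def by (simp add: coeff_map_poly sum_distrib_left mult_ac)
  also have "\<dots> = (\<Sum>l\<le>2*n. \<Sum>i\<in>I. \<Sum>j\<in>I. complex_of_real (W l) * ((complex_of_real (c i) * coeff (q i) l) * cnj (complex_of_real (c j) * coeff (q j) l)))"
  proof -
    have "\<And>i. (\<Sum>j\<in>I. \<Sum>l\<le>2*n. complex_of_real (W l) * ((complex_of_real (c i) * coeff (q i) l) * cnj (complex_of_real (c j) * coeff (q j) l)))
       = (\<Sum>l\<le>2*n. \<Sum>j\<in>I. complex_of_real (W l) * ((complex_of_real (c i) * coeff (q i) l) * cnj (complex_of_real (c j) * coeff (q j) l)))"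
      by (rule sum.swap)
    thus ?thesis by (simp only:) (rule sum.swap)
  qed
  also have "\<dots> = (\<Sum>l\<le>2*n. complex_of_real (W l) * (Sl l * cnj (Sl l)))"
  proof -
    have "Sl l * cnj (Sl l) = (\<Sum>i\<in>I. \<Sum>j\<in>I. (complex_of_real (c i) * coeff (q i) l) * cnj (complex_of_real (c j) * coeff (q j) l))" for l
      unfolding Sl_def cnj_sum by (rule sum_product)
    thus ?thesis by (simp only: sum_distrib_left)
  qed
  also have "\<dots> = complex_of_real (\<Sum>l\<le>2*n. W l * (cmod (Sl l))^2)"
    by (simp only: of_real_sum of_real_mult complex_norm_square)
  finally have eq: "fact n * fact n * (\<Sum>i\<in>I. \<Sum>j\<in>I. c i * c j * legendreP n (x i \<bullet> x j)) = (\<Sum>l\<le>2*n. W l * (cmod (Sl l))^2)"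
    by (simp only: of_real_eq_iff)
  have nn: "0 \<le> (\<Sum>l\<le>2*n. W l * (cmod (Sl l))^2)"
    by (intro sum_nonneg mult_nonneg_nonneg) (simp_all add: W_def)
  define T where "T = (\<Sum>i\<in>I. \<Sum>j\<in>I. c i * c j * legendreP n (x i \<bullet> x j))"
  have F: "(0::real) < fact n * fact n" by simp
  have "0 \<le> fact n * fact n * T" using eq nn unfolding T_def by linarith
  hence "0 \<le> (fact n * fact n * T) / (fact n * fact n)" using F by (rule divide_nonneg_pos)
  moreover have "(fact n * fact n * T) / (fact n * fact n) = T" using F by (simp del: of_nat_fact)
  ultimately show ?thesis unfolding T_def by simp
qed



lemma legendre_one: "legendreP n 1 = 1 \<and> legendreP (Suc n) 1 = 1"
  by (induction n) (auto simp: field_simps)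

lemma legendre_bound:
  assumes "x \<in> sphere2" "y \<in> sphere2"
  shows "\<bar>legendreP n (x \<bullet> y)\<bar> \<le> 1"
proof -
  have xx: "x \<bullet> x = 1" "y \<bullet> y = 1" using assms by (simp_all add: sphere2_def)
  define xx' where "xx' = (\<lambda>i::bool. if i then x else y)"
  have S: "\<And>i. i \<in> UNIV \<Longrightarrow> xx' i \<in> sphere2" using assms by (simp add: xx'_def)
  have P1: "legendreP n 1 = 1" using legendre_one by blast
  have H: "0 \<le> (\<Sum>i\<in>UNIV. \<Sum>j\<in>UNIV. (\<lambda>i. if i then 1 else s) i * (\<lambda>i. if i then 1 else s) j * legendreP n (xx' i \<bullet> xx' j))"
    for s :: real
    by (rule legendre_pd) (simp_all add: S)
  have "0 \<le> 2 + 2 * s * legendreP n (x \<bullet> y)" if "s * s = 1" for s :: real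
    using H[of s] that by (simp add: UNIV_bool xx'_def xx P1 inner_commute[of y x] algebra_simps)
  from this[of 1] this[of "-1"] show ?thesis by simp
qed

theorem mainTheorem1:
  fixes b :: "nat \<Rightarrow> real^3 \<Rightarrow> real"
    and k :: nat and x :: "nat \<Rightarrow> real^3" and a :: "nat \<Rightarrow> real"
  assumes nonneg: "\<And>n y. y \<in> sphere2 \<Longrightarrow> b n y \<ge> 0"
    and summ: "\<And>y. y \<in> sphere2 \<Longrightarrow> summable (\<lambda>n. b n y)"
    and pts: "\<And>i. i \<in> {1..k} \<Longrightarrow> x i \<in> sphere2"
  shows "(\<Sum>i=1..k. \<Sum>j=1..k. a i * a j * covC b (x i) (x j)) \<ge> 0"
proof -
  define f where "f i j n = sqrt (b n (x i) * b n (x j)) * legendreP n (x i \<bullet> x j)" for i j n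
  have sf: "summable (f i j)" if "i \<in> {1..k}" "j \<in> {1..k}" for i j
  proof (rule summable_comparison_test')
    show "summable (\<lambda>n. (b n (x i) + b n (x j)) / 2)"
      using summ[OF pts[OF that(1)]] summ[OF pts[OF that(2)]] by (intro summable_divide summable_add)
    fix n :: nat
    have nn: "0 \<le> b n (x i) * b n (x j)" using nonneg[OF pts[OF that(1)]] nonneg[OF pts[OF that(2)]] by simp
    have "norm (f i j n) = sqrt (b n (x i) * b n (x j)) * \<bar>legendreP n (x i \<bullet> x j)\<bar>"
    proof -
      have "0 \<le> b n (x i) * b n (x j)" using nonneg[OF pts[OF that(1)]] nonneg[OF pts[OF that(2)]] by simp
      thus ?thesis by (simp add: f_def abs_mult)
    qed
    also have "\<dots> \<le> sqrt (b n (x i) * b n (x j)) * 1"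
      by (intro mult_left_mono legendre_bound pts that) (simp add: nn)
    also have "\<dots> \<le> (b n (x i) + b n (x j)) / 2"
      using arith_geo_mean_sqrt[OF nonneg[OF pts[OF that(1)]] nonneg[OF pts[OF that(2)]]] by simp
    finally show "norm (f i j n) \<le> (b n (x i) + b n (x j)) / 2" .
  qed
  have "(\<Sum>i=1..k. \<Sum>j=1..k. a i * a j * covC b (x i) (x j))
      = (\<Sum>i=1..k. \<Sum>j=1..k. (\<Sum>n. a i * a j * f i j n))"
  proof -
    have cov: "covC b (x i) (x j) = suminf (f i j)" for i j by (simp add: covC_def f_def[abs_def])
    show ?thesis unfolding cov by (intro sum.cong refl) (simp add: suminf_mult sf)
  qed
  also have "\<dots> = (\<Sum>i=1..k. (\<Sum>n. \<Sum>j=1..k. a i * a j * f i j n))"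
    by (intro sum.cong refl suminf_sum[symmetric] summable_mult sf) auto
  also have "\<dots> = (\<Sum>n. \<Sum>i=1..k. \<Sum>j=1..k. a i * a j * f i j n)"
    by (intro suminf_sum[symmetric] summable_sum summable_mult sf) auto
  also have "\<dots> \<ge> 0"
  proof (rule suminf_nonneg)
    show "summable (\<lambda>n. \<Sum>i=1..k. \<Sum>j=1..k. a i * a j * f i j n)"
      by (intro summable_sum summable_mult sf) auto
    fix n
    have "(\<Sum>i=1..k. \<Sum>j=1..k. a i * a j * f i j n) =
      (\<Sum>i=1..k. \<Sum>j=1..k. (a i * sqrt (b n (x i))) * (a j * sqrt (b n (x j))) * legendreP n (x i \<bullet> x j))"
      by (simp add: f_def real_sqrt_mult mult_ac)
    also have "\<dots> \<ge> 0" by (rule legendre_pd) (simp_all add: pts)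
    finally show "0 \<le> (\<Sum>i=1..k. \<Sum>j=1..k. a i * a j * f i j n)" .
  qed
  finally show ?thesis .
qed

end
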